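(* Assume $p_0\in(0,1)$, $p_j\in(0,1)$ and $\tau_j=\frac{p_0}{p_0+2(1-p_0)p_j}$ for $j=1,\dots,k$. Then for every $\Theta\in\mathbb R^{nd}$, $$\mathbb E_\xi\|G(\Theta)\|^2\le 4\mathcal L\big(F(\Theta)-F(\hat\Theta)\big)+2\sigma^2_{\hat\Theta}.$$
   Context: Clients $1,\dots,n$ are partitioned into nonempty disjoint clusters $\mathcal I_1,\dots,\mathcal I_k$; $d\ge1$. Each $f_i:\mathbb R^d\to\mathbb R$ is differentiable, $\mu$-strongly convex and $L$-smooth ($0<\mu\le L$). Fix $\gamma_i>0$ and $\alpha_j\in[0,1]$, not all $\alpha_j=0$. For $\Theta=(\theta_1,\dots,\theta_n)$ let $\Theta_j$ be the stacked vector of $\theta_i$, $i\in\mathcal I_j$; define $\bar\theta_j=\frac{\sum_{i\in\mathcal I_j}\gamma_i\theta_i}{\sum_{i\in\mathcal I_j}\gamma_i}$, $\bar\theta=\frac{\sum_{j}\sum_{i\in\mathcal I_j}\alpha_j\gamma_i\theta_i}{\sum_{j}\sum_{i\in\mathcal I_j}\alpha_j\gamma_i}$, $\psi_j(\Theta_j)=\frac12\sum_{i\in\mathcal I_j}\gamma_i\|\theta_i-\bar\theta_j\|^2$, $\varphi(\Theta)=\frac12\sum_{j}\alpha_j\sum_{i\in\mathcal I_j}\gamma_i\|\theta_i-\bar\theta\|^2$, $F_j(\Theta_j)=\sum_{i\in\mathcal I_j}f_i(\theta_i)$, and $F(\Theta)=\sum_jF_j(\Theta_j)+\sum_j(1-\alpha_j)\psi_j(\Theta_j)+\varphi(\Theta)$;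 $\hat\Theta$ is its unique minimizer. Gradient oracle: $\xi=(\xi_0,\dots,\xi_k)$ independent Bernoulli with $\mathbb P(\xi_j=1)=p_j$; $G(\Theta)=(G_1,\dots,G_n)$ with, for $i\in\mathcal I_j$: $G_i=\frac{\gamma_i\alpha_j}{p_0}(\theta_i-\bar\theta)+\frac{\gamma_i\tau_j(1-\alpha_j)}{p_0}(\theta_i-\bar\theta_j)$ if $\xi_0=1$; $G_i=\frac{\gamma_i(1-\tau_j)(1-\alpha_j)}{(1-p_0)p_j}(\theta_i-\bar\theta_j)$ if $\xi_0=0,\xi_j=1$; $G_i=\frac{1}{(1-p_0)(1-p_j)}\nabla f_i(\theta_i)$ if $\xi_0=\xi_j=0$. Define $\mathcal L=\max\big\{\frac{2}{p_0}\max_{j}\max_{i\in\mathcal I_j}\alpha_j\gamma_i,\ \max_{j}\frac{2(1-\alpha_j)\max_{i\in\mathcal I_j}\gamma_i}{p_0+2(1-p_0)p_j},\ \frac{L}{1-p_0}\max_{j}\frac{1}{1-p_j}\big\}$ and $\sigma^2_{\hat\Theta}=\frac{2}{p_0}\|\nabla\varphi(\hat\Theta)\|^2+\sum_{j=1}^k\frac{2(1-\alpha_j)^2}{p_0+2(1-p_0)p_j}\|\nabla\psi_j(\hat\Theta_j)\|^2+\frac{1}{1-p_0}\sum_{j=1}^k\frac{1}{1-p_j}\|\nabla F_j(\hat\Theta_j)\|^2$. *)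

theory Defs
  imports "HOL-Analysis.Analysis"
begin

(* Gradient of a real-valued function on a Euclidean space (Riesz representer of the
   Frechet derivative); well defined whenever the function is differentiable. *)
definition grad :: "('a::euclidean_space \<Rightarrow> real) \<Rightarrow> 'a \<Rightarrow> 'a" where
  "grad g x = (SOME v. (g has_derivative (\<lambda>h. v \<bullet> h)) (at x))"

definition strongly_convex :: "real \<Rightarrow> ('a::euclidean_space \<Rightarrow> real) \<Rightarrow> bool" where
  "strongly_convex mu g \<longleftrightarrow> (\<forall>x y. \<forall>t\<in>{0..1}.
      g (t *\<^sub>R x + (1 - t) *\<^sub>R y) \<le> t * g x + (1 - t) * g y - mu / 2 * t * (1 - t) * (norm (x - y))^2)"

definition smooth :: "real \<Rightarrow> ('a::euclidean_space \<Rightarrow> real) \<Rightarrow> bool" where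
  "smooth L g \<longleftrightarrow> (\<forall>x. g differentiable (at x)) \<and> L-lipschitz_on UNIV (grad g)"

(* Clients are the elements of the finite type 'n, clusters the elements of the finite
   type 'k; cl i is the cluster of client i.  Theta :: 'd^'n stacks the theta_i. *)

definition cluster_mean :: "('n::finite \<Rightarrow> real) \<Rightarrow> ('n \<Rightarrow> 'k) \<Rightarrow> 'd::euclidean_space^'n \<Rightarrow> 'k \<Rightarrow> 'd" where
  "cluster_mean \<gamma> cl \<Theta> j =
     (\<Sum>i\<in>{i. cl i = j}. \<gamma> i *\<^sub>R (\<Theta> $ i)) /\<^sub>R (\<Sum>i\<in>{i. cl i = j}. \<gamma> i)"

definition global_mean :: "('k::finite \<Rightarrow> real) \<Rightarrow> ('n::finite \<Rightarrow> real) \<Rightarrow> ('n \<Rightarrow> 'k) \<Rightarrow> 'd::euclidean_space^'n \<Rightarrow> 'd" where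
  "global_mean \<alpha> \<gamma> cl \<Theta> =
     (\<Sum>j\<in>UNIV. \<Sum>i\<in>{i. cl i = j}. (\<alpha> j * \<gamma> i) *\<^sub>R (\<Theta> $ i)) /\<^sub>R
     (\<Sum>j\<in>UNIV. \<Sum>i\<in>{i. cl i = j}. \<alpha> j * \<gamma> i)"

(* psi_j, viewed as a function of the full Theta (it only depends on Theta_j) *)
definition psi :: "('n::finite \<Rightarrow> real) \<Rightarrow> ('n \<Rightarrow> 'k) \<Rightarrow> 'k \<Rightarrow> 'd::euclidean_space^'n \<Rightarrow> real" where
  "psi \<gamma> cl j \<Theta> = 1/2 * (\<Sum>i\<in>{i. cl i = j}. \<gamma> i * (norm (\<Theta> $ i - cluster_mean \<gamma> cl \<Theta> j))^2)"

definition phi :: "('k::finite \<Rightarrow> real) \<Rightarrow> ('n::finite \<Rightarrow> real) \<Rightarrow> ('n \<Rightarrow> 'k) \<Rightarrow> 'd::euclidean_space^'n \<Rightarrow> real" where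
  "phi \<alpha> \<gamma> cl \<Theta> = 1/2 * (\<Sum>j\<in>UNIV. \<alpha> j * (\<Sum>i\<in>{i. cl i = j}. \<gamma> i * (norm (\<Theta> $ i - global_mean \<alpha> \<gamma> cl \<Theta>))^2))"

(* F_j, viewed as a function of the full Theta (it only depends on Theta_j) *)
definition Fc :: "('n::finite \<Rightarrow> 'd::euclidean_space \<Rightarrow> real) \<Rightarrow> ('n \<Rightarrow> 'k) \<Rightarrow> 'k \<Rightarrow> 'd^'n \<Rightarrow> real" where
  "Fc f cl j \<Theta> = (\<Sum>i\<in>{i. cl i = j}. f i (\<Theta> $ i))"

definition Fobj :: "('n::finite \<Rightarrow> 'd::euclidean_space \<Rightarrow> real) \<Rightarrow> ('k::finite \<Rightarrow> real) \<Rightarrow> ('n \<Rightarrow> real) \<Rightarrow> ('n \<Rightarrow> 'k) \<Rightarrow> 'd^'n \<Rightarrow> real" where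
  "Fobj f \<alpha> \<gamma> cl \<Theta> = (\<Sum>j\<in>UNIV. Fc f cl j \<Theta>) + (\<Sum>j\<in>UNIV. (1 - \<alpha> j) * psi \<gamma> cl j \<Theta>) + phi \<alpha> \<gamma> cl \<Theta>"

(* The stochastic gradient G(Theta) for the outcome (xi0, xi) of the coins xi_0 and xi_j, j in 'k *)
definition Gorc :: "('n::finite \<Rightarrow> 'd::euclidean_space \<Rightarrow> real) \<Rightarrow> ('k::finite \<Rightarrow> real) \<Rightarrow> ('n \<Rightarrow> real) \<Rightarrow> ('n \<Rightarrow> 'k)
    \<Rightarrow> real \<Rightarrow> ('k \<Rightarrow> real) \<Rightarrow> ('k \<Rightarrow> real) \<Rightarrow> bool \<Rightarrow> ('k \<Rightarrow> bool) \<Rightarrow> 'd^'n \<Rightarrow> 'd^'n" where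
  "Gorc f \<alpha> \<gamma> cl p0 p \<tau> xi0 xi \<Theta> = (\<chi> i. let j = cl i in
     if xi0 then
       (\<gamma> i * \<alpha> j / p0) *\<^sub>R (\<Theta> $ i - global_mean \<alpha> \<gamma> cl \<Theta>)
       + (\<gamma> i * \<tau> j * (1 - \<alpha> j) / p0) *\<^sub>R (\<Theta> $ i - cluster_mean \<gamma> cl \<Theta> j)
     else if xi j then
       (\<gamma> i * (1 - \<tau> j) * (1 - \<alpha> j) / ((1 - p0) * p j)) *\<^sub>R (\<Theta> $ i - cluster_mean \<gamma> cl \<Theta> j)
     else
       (1 / ((1 - p0) * (1 - p j))) *\<^sub>R grad (f i) (\<Theta> $ i))"

(* E_xi ||G(Theta)||^2 for independent Bernoulli xi_0 ~ B(p0), xi_j ~ B(p j):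
   the expectation over the finite product distribution written as a weighted sum. *)
definition EGsq :: "('n::finite \<Rightarrow> 'd::euclidean_space \<Rightarrow> real) \<Rightarrow> ('k::finite \<Rightarrow> real) \<Rightarrow> ('n \<Rightarrow> real) \<Rightarrow> ('n \<Rightarrow> 'k)
    \<Rightarrow> real \<Rightarrow> ('k \<Rightarrow> real) \<Rightarrow> ('k \<Rightarrow> real) \<Rightarrow> 'd^'n \<Rightarrow> real" where
  "EGsq f \<alpha> \<gamma> cl p0 p \<tau> \<Theta> =
     (\<Sum>xi0\<in>(UNIV::bool set). \<Sum>xi\<in>(UNIV::('k \<Rightarrow> bool) set).
        ((if xi0 then p0 else 1 - p0) * (\<Prod>j\<in>UNIV. if xi j then p j else 1 - p j))
        * (norm (Gorc f \<alpha> \<gamma> cl p0 p \<tau> xi0 xi \<Theta>))^2)"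

definition LLcal :: "real \<Rightarrow> ('k::finite \<Rightarrow> real) \<Rightarrow> ('n::finite \<Rightarrow> real) \<Rightarrow> ('n \<Rightarrow> 'k) \<Rightarrow> real \<Rightarrow> ('k \<Rightarrow> real) \<Rightarrow> real" where
  "LLcal L \<alpha> \<gamma> cl p0 p = Max {
     2 / p0 * Max ((\<lambda>j. Max ((\<lambda>i. \<alpha> j * \<gamma> i) ` {i. cl i = j})) ` UNIV),
     Max ((\<lambda>j. 2 * (1 - \<alpha> j) * Max (\<gamma> ` {i. cl i = j}) / (p0 + 2 * (1 - p0) * p j)) ` UNIV),
     L / (1 - p0) * Max ((\<lambda>j. 1 / (1 - p j)) ` UNIV)}"

definition sigma2 :: "('n::finite \<Rightarrow> 'd::euclidean_space \<Rightarrow> real) \<Rightarrow> ('k::finite \<Rightarrow> real) \<Rightarrow> ('n \<Rightarrow> real) \<Rightarrow> ('n \<Rightarrow> 'k)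
    \<Rightarrow> real \<Rightarrow> ('k \<Rightarrow> real) \<Rightarrow> 'd^'n \<Rightarrow> real" where
  "sigma2 f \<alpha> \<gamma> cl p0 p \<Theta>h =
     2 / p0 * (norm (grad (phi \<alpha> \<gamma> cl) \<Theta>h))^2
     + (\<Sum>j\<in>UNIV. 2 * (1 - \<alpha> j)^2 / (p0 + 2 * (1 - p0) * p j) * (norm (grad (psi \<gamma> cl j) \<Theta>h))^2)
     + 1 / (1 - p0) * (\<Sum>j\<in>UNIV. 1 / (1 - p j) * (norm (grad (Fc f cl j) \<Theta>h))^2)"

end

theory Submission
  imports Defs
begin


lemma marginal:
  fixes q :: "'k::finite \<Rightarrow> bool \<Rightarrow> real" and h :: "bool \<Rightarrow> real"
  assumes "\<And>j. q j True + q j False = 1"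
  shows "(\<Sum>xi\<in>(UNIV::('k \<Rightarrow> bool) set). (\<Prod>j\<in>UNIV. q j (xi j)) * h (xi j0))
         = q j0 True * h True + q j0 False * h False"
proof -
  define g where "g j b = q j b * (if j = j0 then h b else 1)" for j b
  have "(\<Prod>j\<in>UNIV. \<Sum>b\<in>UNIV. g j b) = (\<Sum>xi\<in>PiE UNIV (\<lambda>_. UNIV). \<Prod>j\<in>UNIV. g j (xi j))"
    by (rule prod_sum_PiE) auto
  also have "\<dots> = (\<Sum>xi\<in>(UNIV::('k \<Rightarrow> bool) set). (\<Prod>j\<in>UNIV. q j (xi j)) * h (xi j0))"
  proof (rule sum.cong)
    fix xi :: "'k \<Rightarrow> bool"
    have "(\<Prod>j\<in>UNIV. g j (xi j)) = (\<Prod>j\<in>UNIV. q j (xi j)) * (\<Prod>j\<in>UNIV. (if j = j0 then h (xi j) else 1))"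
      unfolding g_def by (simp add: prod.distrib)
    also have "(\<Prod>j\<in>UNIV. (if j = j0 then h (xi j) else 1)) = h (xi j0)"
      by (subst prod.If_cases) auto
    finally show "(\<Prod>j\<in>UNIV. g j (xi j)) = (\<Prod>j\<in>UNIV. q j (xi j)) * h (xi j0)" .
  qed simp
  finally have 1: "(\<Prod>j\<in>UNIV. \<Sum>b\<in>UNIV. g j b) = (\<Sum>xi\<in>(UNIV::('k \<Rightarrow> bool) set). (\<Prod>j\<in>UNIV. q j (xi j)) * h (xi j0))" .
  have "(\<Prod>j\<in>UNIV. \<Sum>b\<in>UNIV. g j b) = (\<Prod>j\<in>UNIV. if j = j0 then q j0 True * h True + q j0 False * h False else 1)"
    using assms by (intro prod.cong) (auto simp: g_def UNIV_bool add.commute)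
  also have "\<dots> = q j0 True * h True + q j0 False * h False"
    by (subst prod.If_cases) auto
  finally show ?thesis using 1 by simp
qed



lemma norm_sq_vec: "(norm (x::'a::real_normed_vector^'n::finite))^2 = (\<Sum>i\<in>UNIV. (norm (x$i))^2)"
  unfolding norm_vec_def L2_set_def by (simp add: sum_nonneg)

lemma Gorc_comp: "Gorc f \<alpha> \<gamma> cl p0 p \<tau> xi0 xi \<Theta> $ i = Gorc f \<alpha> \<gamma> cl p0 p \<tau> xi0 (\<lambda>_. xi (cl i)) \<Theta> $ i"
  unfolding Gorc_def by (simp add: Let_def)

lemma EGsq_expand:
  fixes f :: "'n::finite \<Rightarrow> 'd::euclidean_space \<Rightarrow> real" and cl :: "'n \<Rightarrow> 'k::finite"
  assumes "\<And>j. 0 \<le> p j"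
  shows "EGsq f \<alpha> \<gamma> cl p0 p \<tau> \<Theta> = (\<Sum>i\<in>UNIV.
     p0 * (norm (Gorc f \<alpha> \<gamma> cl p0 p \<tau> True (\<lambda>_. True) \<Theta> $ i))^2
   + (1 - p0) * (p (cl i) * (norm (Gorc f \<alpha> \<gamma> cl p0 p \<tau> False (\<lambda>_. True) \<Theta> $ i))^2
               + (1 - p (cl i)) * (norm (Gorc f \<alpha> \<gamma> cl p0 p \<tau> False (\<lambda>_. False) \<Theta> $ i))^2))"
proof -
  let ?G = "\<lambda>xi0 xi. Gorc f \<alpha> \<gamma> cl p0 p \<tau> xi0 xi \<Theta>"
  let ?q = "\<lambda>j b. if b then p j else 1 - p j"
  have "EGsq f \<alpha> \<gamma> cl p0 p \<tau> \<Theta> = (\<Sum>xi0\<in>(UNIV::bool set). \<Sum>xi\<in>(UNIV::('k \<Rightarrow> bool) set).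
        \<Sum>i\<in>UNIV. (if xi0 then p0 else 1 - p0) * ((\<Prod>j\<in>UNIV. ?q j (xi j)) * (norm (?G xi0 (\<lambda>_. xi (cl i)) $ i))^2))"
    unfolding EGsq_def norm_sq_vec
    by (intro sum.cong refl) (simp add: sum_distrib_left Gorc_comp[symmetric] mult.assoc)
  also have "\<dots> = (\<Sum>i\<in>UNIV. \<Sum>xi0\<in>(UNIV::bool set). (if xi0 then p0 else 1 - p0) *
        (\<Sum>xi\<in>(UNIV::('k \<Rightarrow> bool) set). (\<Prod>j\<in>UNIV. ?q j (xi j)) * (\<lambda>b. (norm (?G xi0 (\<lambda>_. b) $ i))^2) (xi (cl i))))"
    apply (simp only: sum_distrib_left)
    apply (subst sum.swap)
    apply (rule sum.swap)
    done
  also have "\<dots> = (\<Sum>i\<in>UNIV. \<Sum>xi0\<in>(UNIV::bool set). (if xi0 then p0 else 1 - p0) *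
        (p (cl i) * (norm (?G xi0 (\<lambda>_. True) $ i))^2 + (1 - p (cl i)) * (norm (?G xi0 (\<lambda>_. False) $ i))^2))"
    by (subst marginal) auto
  also have "\<dots> = (\<Sum>i\<in>UNIV.
     p0 * (norm (?G True (\<lambda>_. True) $ i))^2
   + (1 - p0) * (p (cl i) * (norm (?G False (\<lambda>_. True) $ i))^2
               + (1 - p (cl i)) * (norm (?G False (\<lambda>_. False) $ i))^2))"
    by (intro sum.cong refl) (simp add: UNIV_bool Gorc_def Let_def algebra_simps)
  finally show ?thesis .
qed



definition Mc :: "('n::finite \<Rightarrow> real) \<Rightarrow> 'd::euclidean_space^'n \<Rightarrow> 'd" where
  "Mc c \<Theta> = (\<Sum>i\<in>UNIV. c i *\<^sub>R (\<Theta> $ i)) /\<^sub>R (\<Sum>i\<in>UNIV. c i)"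
definition Qc :: "('n::finite \<Rightarrow> real) \<Rightarrow> 'd::euclidean_space^'n \<Rightarrow> real" where
  "Qc c \<Theta> = 1/2 * (\<Sum>i\<in>UNIV. c i * (norm (\<Theta> $ i - Mc c \<Theta>))^2)"
definition Rc :: "('n::finite \<Rightarrow> real) \<Rightarrow> 'd::euclidean_space^'n \<Rightarrow> 'd^'n" where
  "Rc c \<Theta> = (\<chi> i. c i *\<^sub>R (\<Theta> $ i - Mc c \<Theta>))"

lemma Mc_diff: "Mc c (x - y) = Mc c x - Mc c y"
  unfolding Mc_def by (simp add: scaleR_diff_right sum_subtractf algebra_simps)

lemma Mc_add: "Mc c (x + y) = Mc c x + Mc c y"
  unfolding Mc_def by (simp add: scaleR_add_right sum.distrib algebra_simps)

lemma Mc_scale: "Mc c (a *\<^sub>R x) = a *\<^sub>R Mc c x"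
  unfolding Mc_def by (simp add: scaleR_sum_right algebra_simps)

lemma Rc_diff: "Rc c (x - y) = Rc c x - Rc c y"
  unfolding Rc_def by (simp add: Mc_diff vec_eq_iff algebra_simps)

lemma Rc_sum0:
  assumes "(\<Sum>i\<in>UNIV. c i) \<noteq> 0"
  shows "(\<Sum>i\<in>UNIV. c i *\<^sub>R (y $ i - Mc c y)) = 0"
proof -
  have "(\<Sum>i\<in>UNIV. c i *\<^sub>R (y $ i - Mc c y)) = (\<Sum>i\<in>UNIV. c i *\<^sub>R y $ i) - (\<Sum>i\<in>UNIV. c i) *\<^sub>R Mc c y"
    by (simp add: scaleR_diff_right sum_subtractf scaleR_sum_left)
  also have "(\<Sum>i\<in>UNIV. c i) *\<^sub>R Mc c y = (\<Sum>i\<in>UNIV. c i *\<^sub>R y $ i)"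
    using assms unfolding Mc_def by simp
  finally show ?thesis by simp
qed

lemma Rc_inner: "Rc c y \<bullet> z = (\<Sum>i\<in>UNIV. c i * ((y $ i - Mc c y) \<bullet> z $ i))"
  unfolding Rc_def inner_vec_def by simp

lemma Rc_K:
  assumes "(\<Sum>i\<in>UNIV. c i) \<noteq> 0"
  shows "(\<Sum>i\<in>UNIV. c i * ((y $ i - Mc c y) \<bullet> (z $ i - Mc c z))) = Rc c y \<bullet> z"
proof -
  have "(\<Sum>i\<in>UNIV. c i * ((y $ i - Mc c y) \<bullet> (z $ i - Mc c z)))
      = (\<Sum>i\<in>UNIV. c i * ((y $ i - Mc c y) \<bullet> z $ i)) - (\<Sum>i\<in>UNIV. c i *\<^sub>R (y $ i - Mc c y)) \<bullet> Mc c z"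
    by (simp add: inner_diff_right right_diff_distrib sum_subtractf inner_sum_left)
  then show ?thesis by (simp only: Rc_sum0[OF assms] inner_zero_left diff_zero Rc_inner)
qed

lemma Qc_expand:
  assumes "(\<Sum>i\<in>UNIV. c i) \<noteq> 0"
  shows "Qc c x - Qc c y - Rc c y \<bullet> (x - y) = Qc c (x - y)"
proof -
  define e where "e = x - y"
  have x: "x = y + e" unfolding e_def by simp
  have sq: "\<And>i. (norm (x $ i - Mc c x))^2 = (norm (y $ i - Mc c y))^2 + 2 * ((y $ i - Mc c y) \<bullet> (e $ i - Mc c e)) + (norm (e $ i - Mc c e))^2"
  proof -
    fix i
    have "x $ i - Mc c x = (y $ i - Mc c y) + (e $ i - Mc c e)" unfolding x Mc_add by simp
    then show "(norm (x $ i - Mc c x))^2 = (norm (y $ i - Mc c y))^2 + 2 * ((y $ i - Mc c y) \<bullet> (e $ i - Mc c e)) + (norm (e $ i - Mc c e))^2"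
      by (simp add: power2_norm_eq_inner inner_add_left inner_add_right inner_commute)
  qed
  have "(\<Sum>i\<in>UNIV. c i * (norm (x $ i - Mc c x))^2) = (\<Sum>i\<in>UNIV. c i * (norm (y $ i - Mc c y))^2) + 2 * (\<Sum>i\<in>UNIV. c i * ((y $ i - Mc c y) \<bullet> (e $ i - Mc c e))) + (\<Sum>i\<in>UNIV. c i * (norm (e $ i - Mc c e))^2)"
    unfolding sq by (simp add: distrib_left sum.distrib sum_distrib_left mult.left_commute)
  then have "Qc c x = Qc c y + (\<Sum>i\<in>UNIV. c i * ((y $ i - Mc c y) \<bullet> (e $ i - Mc c e))) + Qc c e"
    unfolding Qc_def by simp
  then show ?thesis using Rc_K[OF assms, of y e] by (simp add: e_def)
qed

lemma Mc_linear: "bounded_linear (\<lambda>\<Theta>::'d::euclidean_space^'n::finite. \<Theta> $ i - Mc c \<Theta>)"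
proof -
  have "linear (\<lambda>\<Theta>::'d::euclidean_space^'n::finite. \<Theta> $ i - Mc c \<Theta>)"
    by (rule linearI) (simp_all add: Mc_add Mc_scale algebra_simps)
  then show ?thesis by (simp add: linear_conv_bounded_linear)
qed

lemma Qc_deriv:
  assumes "(\<Sum>i\<in>UNIV. c i) \<noteq> 0"
  shows "(Qc c has_derivative (\<lambda>h. Rc c \<Theta> \<bullet> h)) (at \<Theta>)"
proof -
  have eq: "Qc c = (\<lambda>\<Theta>. 1/2 * (\<Sum>i\<in>UNIV. c i * ((\<Theta> $ i - Mc c \<Theta>) \<bullet> (\<Theta> $ i - Mc c \<Theta>))))"
    unfolding Qc_def by (simp add: power2_norm_eq_inner)
  have d: "\<And>i. ((\<lambda>\<Theta>. \<Theta> $ i - Mc c \<Theta>) has_derivative (\<lambda>h. h $ i - Mc c h)) (at \<Theta>)"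
    using Mc_linear by (rule bounded_linear_imp_has_derivative)
  have "(Qc c has_derivative (\<lambda>h. 1/2 * (\<Sum>i\<in>UNIV. c i * ((\<Theta> $ i - Mc c \<Theta>) \<bullet> (h $ i - Mc c h) + (h $ i - Mc c h) \<bullet> (\<Theta> $ i - Mc c \<Theta>))))) (at \<Theta>)"
    unfolding eq
    by (intro has_derivative_mult_right has_derivative_sum has_derivative_inner d)
  moreover have "(\<lambda>h. 1/2 * (\<Sum>i\<in>UNIV. c i * ((\<Theta> $ i - Mc c \<Theta>) \<bullet> (h $ i - Mc c h) + (h $ i - Mc c h) \<bullet> (\<Theta> $ i - Mc c \<Theta>)))) = (\<lambda>h. Rc c \<Theta> \<bullet> h)"
  proof
    fix h
    show "1/2 * (\<Sum>i\<in>UNIV. c i * ((\<Theta> $ i - Mc c \<Theta>) \<bullet> (h $ i - Mc c h) + (h $ i - Mc c h) \<bullet> (\<Theta> $ i - Mc c \<Theta>))) = Rc c \<Theta> \<bullet> h"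
    proof -
      have "(\<Sum>i\<in>UNIV. c i * ((\<Theta> $ i - Mc c \<Theta>) \<bullet> (h $ i - Mc c h) + (h $ i - Mc c h) \<bullet> (\<Theta> $ i - Mc c \<Theta>)))
         = 2 * (\<Sum>i\<in>UNIV. c i * ((\<Theta> $ i - Mc c \<Theta>) \<bullet> (h $ i - Mc c h)))"
        by (simp add: inner_commute sum_distrib_left algebra_simps)
      then show ?thesis using Rc_K[OF assms, of \<Theta> h] by simp
    qed
  qed
  ultimately show ?thesis by simp
qed

lemma Qc_nonneg: "(\<And>i. 0 \<le> c i) \<Longrightarrow> 0 \<le> Qc c x"
  unfolding Qc_def by (intro mult_nonneg_nonneg sum_nonneg) auto

lemma Rc_normsq: "(norm (Rc c e))^2 = (\<Sum>i\<in>UNIV. (c i)^2 * (norm (e $ i - Mc c e))^2)"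
  unfolding norm_sq_vec Rc_def by (simp add: power_mult_distrib)



lemma regroup:
  fixes cl :: "'n::finite \<Rightarrow> 'k::finite" and g :: "'k \<Rightarrow> 'n \<Rightarrow> 'a::comm_monoid_add"
  shows "(\<Sum>j\<in>UNIV. \<Sum>i\<in>{i. cl i = j}. g j i) = (\<Sum>i\<in>UNIV. g (cl i) i)"
proof -
  have "(\<Sum>j\<in>UNIV. \<Sum>i\<in>{i. cl i = j}. g j i) = (\<Sum>j\<in>UNIV. \<Sum>i\<in>{i. i \<in> UNIV \<and> cl i = j}. g (cl i) i)"
    by (intro sum.cong refl) auto
  also have "\<dots> = (\<Sum>i\<in>UNIV. g (cl i) i)"
    by (rule sum.group) auto
  finally show ?thesis .
qed

lemma sum_cluster_if:
  fixes cl :: "'n::finite \<Rightarrow> 'k" and g :: "'n \<Rightarrow> 'a::comm_monoid_add"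
  shows "(\<Sum>i\<in>{i. cl i = j}. g i) = (\<Sum>i\<in>UNIV. if cl i = j then g i else 0)"
  using sum.inter_filter[of UNIV g "\<lambda>i. cl i = j"] by simp

definition wt :: "('k \<Rightarrow> real) \<Rightarrow> ('n \<Rightarrow> real) \<Rightarrow> ('n \<Rightarrow> 'k) \<Rightarrow> 'n \<Rightarrow> real" where
  "wt \<alpha> \<gamma> cl i = \<alpha> (cl i) * \<gamma> i"

definition cw :: "('n \<Rightarrow> real) \<Rightarrow> ('n \<Rightarrow> 'k) \<Rightarrow> 'k \<Rightarrow> 'n \<Rightarrow> real" where
  "cw \<gamma> cl j i = (if cl i = j then \<gamma> i else 0)"

lemma gm_Mc: "global_mean \<alpha> \<gamma> cl \<Theta> = Mc (wt \<alpha> \<gamma> cl) \<Theta>"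
  unfolding global_mean_def Mc_def wt_def
  by (simp only: regroup[where cl=cl and g="\<lambda>j i. (\<alpha> j * \<gamma> i) *\<^sub>R \<Theta> $ i"] regroup[where cl=cl and g="\<lambda>j i. \<alpha> j * \<gamma> i"])

lemma phi_Qc: "phi \<alpha> \<gamma> cl \<Theta> = Qc (wt \<alpha> \<gamma> cl) \<Theta>"
proof -
  have "(\<Sum>j\<in>UNIV. \<alpha> j * (\<Sum>i\<in>{i. cl i = j}. \<gamma> i * (norm (\<Theta> $ i - global_mean \<alpha> \<gamma> cl \<Theta>))^2))
     = (\<Sum>j\<in>UNIV. (\<Sum>i\<in>{i. cl i = j}. \<alpha> j * \<gamma> i * (norm (\<Theta> $ i - global_mean \<alpha> \<gamma> cl \<Theta>))^2))"
    by (simp add: sum_distrib_left mult.assoc)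
  also have "\<dots> = (\<Sum>i\<in>UNIV. wt \<alpha> \<gamma> cl i * (norm (\<Theta> $ i - Mc (wt \<alpha> \<gamma> cl) \<Theta>))^2)"
    by (simp only: regroup gm_Mc wt_def)
  finally show ?thesis unfolding phi_def Qc_def by simp
qed

lemma sum_cw:
  fixes cl :: "'n::finite \<Rightarrow> 'k"
  assumes "\<And>i. F 0 i = (0::'a::comm_monoid_add)"
  shows "(\<Sum>i\<in>UNIV. F (cw \<gamma> cl j i) i) = (\<Sum>i\<in>{i. cl i = j}. F (\<gamma> i) i)"
  unfolding sum_cluster_if[where cl=cl and j=j] using assms by (intro sum.cong) (auto simp: cw_def)

lemma cm_Mc: "cluster_mean \<gamma> cl \<Theta> j = Mc (cw \<gamma> cl j) \<Theta>"
  unfolding cluster_mean_def Mc_def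
  using sum_cw[where F="\<lambda>a i. a *\<^sub>R \<Theta> $ i" and \<gamma>=\<gamma> and cl=cl and j=j] sum_cw[where F="\<lambda>a i. a" and \<gamma>=\<gamma> and cl=cl and j=j]
  by simp

lemma psi_Qc: "psi \<gamma> cl j \<Theta> = Qc (cw \<gamma> cl j) \<Theta>"
  unfolding psi_def Qc_def cm_Mc
  using sum_cw[where F="\<lambda>a i. a * (norm (\<Theta> $ i - Mc (cw \<gamma> cl j) \<Theta>))^2" and \<gamma>=\<gamma> and cl=cl and j=j]
  by simp

lemma grad_eq:
  assumes "(g has_derivative (\<lambda>h. v \<bullet> h)) (at x)"
  shows "grad g x = v"
proof -
  have "(g has_derivative (\<lambda>h. grad g x \<bullet> h)) (at x)"
    unfolding grad_def by (rule someI[of _ v]) (rule assms)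
  then have "(\<lambda>h. grad g x \<bullet> h) = (\<lambda>h. v \<bullet> h)"
    using assms by (rule has_derivative_unique)
  then have "grad g x \<bullet> (grad g x - v) = v \<bullet> (grad g x - v)" by metis
  then have "(grad g x - v) \<bullet> (grad g x - v) = 0" by (simp add: inner_diff_left)
  then show ?thesis by simp
qed

lemma grad_diff:
  fixes g :: "'a::euclidean_space \<Rightarrow> real"
  assumes "g differentiable (at x)"
  shows "(g has_derivative (\<lambda>h. grad g x \<bullet> h)) (at x)"
proof -
  obtain D where D: "(g has_derivative D) (at x)" using assms unfolding differentiable_def by blast
  then have bl: "bounded_linear D" by (rule has_derivative_bounded_linear)
  define v where "v = (\<Sum>b\<in>Basis. D b *\<^sub>R b)"
  have "\<And>h. v \<bullet> h = D h"
  proof -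
    fix h :: 'a
    have "v \<bullet> h = (\<Sum>b\<in>Basis. D b * (b \<bullet> h))" unfolding v_def by (simp add: inner_sum_left)
    also have "\<dots> = (\<Sum>b\<in>Basis. D ((h \<bullet> b) *\<^sub>R b))"
      using bl[THEN bounded_linear.linear, THEN linear_cmul] by (simp add: inner_commute mult.commute)
    also have "\<dots> = D (\<Sum>b\<in>Basis. (h \<bullet> b) *\<^sub>R b)"
      using bl[THEN bounded_linear.linear, THEN linear_sum] by metis
    also have "\<dots> = D h" by (simp add: euclidean_representation)
    finally show "v \<bullet> h = D h" .
  qed
  then have "(g has_derivative (\<lambda>h. v \<bullet> h)) (at x)" using D by simp
  then show ?thesis using grad_eq by metis
qed

lemma Fc_deriv:
  fixes f :: "'n::finite \<Rightarrow> 'd::euclidean_space \<Rightarrow> real"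
  assumes "\<And>i x. f i differentiable (at x)"
  shows "(Fc f cl j has_derivative (\<lambda>h. (\<chi> i. if cl i = j then grad (f i) (\<Theta> $ i) else 0) \<bullet> h)) (at \<Theta>)"
proof -
  have "\<And>i. ((\<lambda>\<Theta>. f i (\<Theta> $ i)) has_derivative (\<lambda>h. grad (f i) (\<Theta> $ i) \<bullet> h $ i)) (at \<Theta>)"
    by (rule has_derivative_compose[where f="\<lambda>\<Theta>. \<Theta> $ i" and g="f i" for i, OF bounded_linear_imp_has_derivative[OF bounded_linear_vec_nth] grad_diff[OF assms]])
  then have "(Fc f cl j has_derivative (\<lambda>h. \<Sum>i\<in>{i. cl i = j}. grad (f i) (\<Theta> $ i) \<bullet> h $ i)) (at \<Theta>)"
    unfolding Fc_def by (intro has_derivative_sum) auto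
  moreover have "(\<lambda>h. \<Sum>i\<in>{i. cl i = j}. grad (f i) (\<Theta> $ i) \<bullet> h $ i) = (\<lambda>h. (\<chi> i. if cl i = j then grad (f i) (\<Theta> $ i) else 0) \<bullet> h)"
    by (rule ext) (simp add: inner_vec_def sum_cluster_if[where cl=cl and j=j] if_distrib[where f="\<lambda>v. v \<bullet> _"] cong: if_cong)
  ultimately show ?thesis by simp
qed



lemma line_deriv:
  fixes f :: "'a::euclidean_space \<Rightarrow> real"
  assumes "\<And>x. f differentiable (at x)"
  shows "((\<lambda>t. f (x + t *\<^sub>R v)) has_real_derivative (grad f (x + t *\<^sub>R v) \<bullet> v)) (at t)"
proof -
  have l: "((\<lambda>t. x + t *\<^sub>R v) has_derivative (\<lambda>s. s *\<^sub>R v)) (at t)"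
    by (auto intro!: derivative_eq_intros)
  have "((\<lambda>t. f (x + t *\<^sub>R v)) has_derivative (\<lambda>s. grad f (x + t *\<^sub>R v) \<bullet> (s *\<^sub>R v))) (at t)"
    by (rule has_derivative_compose[OF l grad_diff[OF assms]])
  moreover have "(\<lambda>s. grad f (x + t *\<^sub>R v) \<bullet> (s *\<^sub>R v)) = (*) (grad f (x + t *\<^sub>R v) \<bullet> v)"
    by (rule ext) (simp add: mult.commute)
  ultimately show ?thesis
    unfolding has_field_derivative_def by simp
qed

lemma sc_tangent:
  fixes f :: "'a::euclidean_space \<Rightarrow> real"
  assumes sc: "strongly_convex \<mu> f" and mu: "0 \<le> \<mu>" and d: "\<And>x. f differentiable (at x)"
  shows "f x + grad f x \<bullet> (y - x) \<le> f y"
proof -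
  define v where "v = y - x"
  define g where "g t = f (x + t *\<^sub>R v)" for t
  have "(g has_real_derivative (grad f x \<bullet> v)) (at 0)"
    using line_deriv[OF d, of x v 0] unfolding g_def by simp
  then have lim: "((\<lambda>t. (g t - g 0) / (t - 0)) \<longlongrightarrow> grad f x \<bullet> v) (at 0)"
    using has_field_derivative_iff by blast
  then have lim': "((\<lambda>t. (g t - g 0) / (t - 0)) \<longlongrightarrow> grad f x \<bullet> v) (at_right 0)"
    by (rule tendsto_mono[OF at_le, rotated]) simp
  have ev: "eventually (\<lambda>t. (g t - g 0) / (t - 0) \<le> f y - f x) (at_right (0::real))"
    unfolding eventually_at_right_field
  proof (intro exI[of _ 1] conjI allI impI)
    fix t :: real assume t: "0 < t" "t < 1"
    have "f (t *\<^sub>R y + (1 - t) *\<^sub>R x) \<le> t * f y + (1 - t) * f x - \<mu> / 2 * t * (1 - t) * (norm (y - x))^2"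
      using sc t unfolding strongly_convex_def by auto
    moreover have "0 \<le> \<mu> / 2 * t * (1 - t) * (norm (y - x))^2" using mu t by simp
    moreover have "t *\<^sub>R y + (1 - t) *\<^sub>R x = x + t *\<^sub>R v" unfolding v_def by (simp add: algebra_simps)
    ultimately have "g t \<le> t * f y + (1 - t) * f x" unfolding g_def by simp
    then have "g t - g 0 \<le> t * (f y - f x)" unfolding g_def by (simp add: algebra_simps)
    then show "(g t - g 0) / (t - 0) \<le> f y - f x" using t by (simp add: divide_le_eq mult.commute)
  qed simp
  have "grad f x \<bullet> v \<le> f y - f x"
    by (rule tendsto_upperbound[OF lim' ev]) simp
  then show ?thesis unfolding v_def by simp
qed

lemma descent:
  fixes f :: "'a::euclidean_space \<Rightarrow> real"
  assumes sm: "smooth L f"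
  shows "f z \<le> f x + grad f x \<bullet> (z - x) + L / 2 * (norm (z - x))^2"
proof -
  have d: "\<And>x. f differentiable (at x)" and lip: "L-lipschitz_on UNIV (grad f)"
    using sm unfolding smooth_def by auto
  define v where "v = z - x"
  define h where "h t = f (x + t *\<^sub>R v) - t * (grad f x \<bullet> v) - L / 2 * t^2 * (norm v)^2" for t
  have "h 1 \<le> h 0"
  proof (rule DERIV_nonpos_imp_nonincreasing[of 0 1 h])
    fix t :: real assume t: "0 \<le> t" "t \<le> 1"
    have D: "(h has_real_derivative (grad f (x + t *\<^sub>R v) \<bullet> v - grad f x \<bullet> v - L * t * (norm v)^2)) (at t)"
      unfolding h_def
      by (rule derivative_eq_intros line_deriv[OF d] refl | simp)+
    have "grad f (x + t *\<^sub>R v) \<bullet> v - grad f x \<bullet> v = (grad f (x + t *\<^sub>R v) - grad f x) \<bullet> v"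
      by (simp add: inner_diff_left)
    also have "\<dots> \<le> norm (grad f (x + t *\<^sub>R v) - grad f x) * norm v"
      by (rule norm_cauchy_schwarz)
    also have "norm (grad f (x + t *\<^sub>R v) - grad f x) \<le> L * norm (t *\<^sub>R v)"
      using lipschitz_onD[OF lip, of "x + t *\<^sub>R v" x] by (simp add: dist_norm)
    then have "norm (grad f (x + t *\<^sub>R v) - grad f x) * norm v \<le> L * norm (t *\<^sub>R v) * norm v"
      by (simp add: mult_right_mono)
    also have "L * norm (t *\<^sub>R v) * norm v = L * t * (norm v)^2"
      using t by (simp add: power2_eq_square)
    finally show "\<exists>y. (h has_real_derivative y) (at t) \<and> y \<le> 0"
      using D by auto
  qed simp
  then show ?thesis unfolding h_def v_def by simp
qed

lemma cocoercive:
  fixes f :: "'a::euclidean_space \<Rightarrow> real"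
  assumes sc: "strongly_convex \<mu> f" and mu: "0 \<le> \<mu>" and sm: "smooth L f" and L: "0 < L"
  shows "(norm (grad f x - grad f y))^2 \<le> 2 * L * (f x - f y - grad f y \<bullet> (x - y))"
proof -
  have d: "\<And>x. f differentiable (at x)" using sm unfolding smooth_def by auto
  define dd where "dd = grad f x - grad f y"
  define z where "z = x - (1 / L) *\<^sub>R dd"
  have 1: "f y + grad f y \<bullet> (z - y) \<le> f z" by (rule sc_tangent[OF sc mu d])
  have 2: "f z \<le> f x + grad f x \<bullet> (z - x) + L / 2 * (norm (z - x))^2" by (rule descent[OF sm])
  have e1: "grad f y \<bullet> (z - y) = grad f y \<bullet> (x - y) - (1 / L) * (grad f y \<bullet> dd)"
    unfolding z_def by (simp add: inner_diff_right algebra_simps)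
  have e2: "grad f x \<bullet> (z - x) = - (1 / L) * (grad f x \<bullet> dd)"
    unfolding z_def by (simp add: inner_diff_right)
  have e3: "L / 2 * (norm (z - x))^2 = (1 / (2 * L)) * (norm dd)^2"
    unfolding z_def using L by (simp add: power2_eq_square field_simps)
  have e4: "grad f x \<bullet> dd - grad f y \<bullet> dd = (norm dd)^2"
    unfolding dd_def by (simp add: power2_norm_eq_inner inner_diff_left)
  from 1 2 e1 e2 e3 have A: "f y + grad f y \<bullet> (x - y) + (1 / L) * (grad f x \<bullet> dd - grad f y \<bullet> dd) - (1 / (2 * L)) * (norm dd)^2 \<le> f x"
    by (simp add: algebra_simps)
  have "(1 / (2 * L)) * (norm dd)^2 \<le> f x - f y - grad f y \<bullet> (x - y)"
  proof -
    have "(1 / L) * (norm dd)^2 - (1 / (2 * L)) * (norm dd)^2 = (1 / (2 * L)) * (norm dd)^2"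
      using L by (simp add: field_simps)
    then show ?thesis using A unfolding e4 by linarith
  qed
  then have "2 * L * ((1 / (2 * L)) * (norm dd)^2) \<le> 2 * L * (f x - f y - grad f y \<bullet> (x - y))"
    using L by (intro mult_left_mono) auto
  then show ?thesis unfolding dd_def using L by simp
qed



lemma sq_add_le: "(norm (a + b))^2 \<le> 2 * (norm a)^2 + 2 * (norm (b::'a::real_inner))^2"
proof -
  have "(norm (a + b))^2 + (norm (a - b))^2 = 2 * (norm a)^2 + 2 * (norm b)^2"
    by (simp add: power2_norm_eq_inner inner_add_left inner_add_right inner_diff_left inner_diff_right inner_commute)
  then show ?thesis by (smt (verit) zero_le_power2)
qed

lemma sq_split_le: "(norm a)^2 \<le> 2 * (norm (a - b))^2 + 2 * (norm (b::'a::real_inner))^2"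
  using sq_add_le[of "a - b" b] by simp

definition Eterm :: "real \<Rightarrow> real \<Rightarrow> real \<Rightarrow> real \<Rightarrow> 'd::real_inner \<Rightarrow> 'd \<Rightarrow> 'd \<Rightarrow> real" where
  "Eterm p0 pj t a U V g =
     p0 * (norm ((1 / p0) *\<^sub>R (U + (t * (1 - a)) *\<^sub>R V)))^2
     + (1 - p0) * (pj * (norm (((1 - t) * (1 - a) / ((1 - p0) * pj)) *\<^sub>R V))^2
                 + (1 - pj) * (norm ((1 / ((1 - p0) * (1 - pj))) *\<^sub>R g))^2)"

lemma Eterm_split:
  assumes "0 \<le> p0" "p0 \<le> 1" "0 \<le> pj" "pj \<le> 1"
  shows "Eterm p0 pj t a U V g \<le> 2 * Eterm p0 pj t a (U - U') (V - V') (g - g') + 2 * Eterm p0 pj t a U' V' g'"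
proof -
  let ?s1 = "1 / p0" and ?c = "t * (1 - a)" and ?s2 = "(1 - t) * (1 - a) / ((1 - p0) * pj)" and ?s3 = "1 / ((1 - p0) * (1 - pj))"
  have 1: "p0 * (norm (?s1 *\<^sub>R (U + ?c *\<^sub>R V)))^2 \<le> p0 * (2 * (norm (?s1 *\<^sub>R ((U - U') + ?c *\<^sub>R (V - V'))))^2 + 2 * (norm (?s1 *\<^sub>R (U' + ?c *\<^sub>R V')))^2)"
    using assms sq_split_le[of "?s1 *\<^sub>R (U + ?c *\<^sub>R V)" "?s1 *\<^sub>R (U' + ?c *\<^sub>R V')"]
    by (intro mult_left_mono) (auto simp: algebra_simps)
  have 2: "pj * (norm (?s2 *\<^sub>R V))^2 \<le> pj * (2 * (norm (?s2 *\<^sub>R (V - V')))^2 + 2 * (norm (?s2 *\<^sub>R V'))^2)"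
    using assms sq_split_le[of "?s2 *\<^sub>R V" "?s2 *\<^sub>R V'"]
    by (intro mult_left_mono) (auto simp: algebra_simps)
  have 3: "(1 - pj) * (norm (?s3 *\<^sub>R g))^2 \<le> (1 - pj) * (2 * (norm (?s3 *\<^sub>R (g - g')))^2 + 2 * (norm (?s3 *\<^sub>R g'))^2)"
    using assms sq_split_le[of "?s3 *\<^sub>R g" "?s3 *\<^sub>R g'"]
    by (intro mult_left_mono) (auto simp: algebra_simps)
  have "(1 - p0) * (pj * (norm (?s2 *\<^sub>R V))^2 + (1 - pj) * (norm (?s3 *\<^sub>R g))^2)
     \<le> (1 - p0) * ((pj * (2 * (norm (?s2 *\<^sub>R (V - V')))^2 + 2 * (norm (?s2 *\<^sub>R V'))^2)) + ((1 - pj) * (2 * (norm (?s3 *\<^sub>R (g - g')))^2 + 2 * (norm (?s3 *\<^sub>R g'))^2)))"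
    using 2 3 assms by (intro mult_left_mono) auto
  with 1 show ?thesis unfolding Eterm_def by (simp add: algebra_simps)
qed

lemma coef_identity:
  fixes p0 pj :: real
  assumes "0 < p0" "p0 < 1" "0 < pj" "pj < 1"
  shows "2 * (p0 / (p0 + 2 * (1 - p0) * pj))^2 / p0 + (1 - p0 / (p0 + 2 * (1 - p0) * pj))^2 / ((1 - p0) * pj)
       = 2 / (p0 + 2 * (1 - p0) * pj)"
proof -
  define D where "D = p0 + 2 * (1 - p0) * pj"
  have D: "0 < D" unfolding D_def using assms by (simp add: add_pos_nonneg)
  have t: "1 - p0 / D = 2 * (1 - p0) * pj / D" using D unfolding D_def by (simp add: field_simps)
  have "2 * (p0 / D)^2 / p0 + (2 * (1 - p0) * pj / D)^2 / ((1 - p0) * pj) = 2 * (p0 + 2 * (1 - p0) * pj) / D^2"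
    using assms D by (simp add: field_simps power2_eq_square)
  also have "\<dots> = 2 / D" unfolding D_def[symmetric] using D by (simp add: power2_eq_square)
  finally show ?thesis unfolding t[folded D_def] D_def[symmetric] by (simp only: t)
qed

lemma sq_div_helper: "0 < (q::real) \<Longrightarrow> q * (x / q)^2 = x^2 / q"
  by (simp add: power2_eq_square)

lemma norm_scale_sq: "(norm (c *\<^sub>R (v::'a::real_normed_vector)))^2 = c^2 * (norm v)^2"
  by (simp add: power_mult_distrib)

lemma Eterm_bound:
  assumes p0: "0 < p0" "p0 < 1" and pj: "0 < pj" "pj < 1" and t: "t = p0 / (p0 + 2 * (1 - p0) * pj)"
  shows "Eterm p0 pj t a U V g \<le> 2 / p0 * (norm U)^2 + 2 * (1 - a)^2 / (p0 + 2 * (1 - p0) * pj) * (norm V)^2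
           + 1 / ((1 - p0) * (1 - pj)) * (norm g)^2"
proof -
  have A: "p0 * (norm ((1 / p0) *\<^sub>R (U + (t * (1 - a)) *\<^sub>R V)))^2 = (1 / p0) * (norm (U + (t * (1 - a)) *\<^sub>R V))^2"
    using p0 by (simp add: power2_eq_square)
  have A2: "(1 / p0) * (norm (U + (t * (1 - a)) *\<^sub>R V))^2 \<le> (1 / p0) * (2 * (norm U)^2 + 2 * (t * (1 - a))^2 * (norm V)^2)"
    using sq_add_le[of U "(t * (1 - a)) *\<^sub>R V", unfolded norm_scale_sq] p0 by (intro mult_left_mono) (auto simp: mult.assoc)
  have B: "(1 - p0) * (pj * (norm (((1 - t) * (1 - a) / ((1 - p0) * pj)) *\<^sub>R V))^2) = (1 - t)^2 * (1 - a)^2 / ((1 - p0) * pj) * (norm V)^2"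
  proof -
    have "0 < (1 - p0) * pj" using p0 pj by simp
    from sq_div_helper[OF this, of "(1 - t) * (1 - a)"]
    show ?thesis unfolding norm_scale_sq by (simp add: power_mult_distrib mult.assoc[symmetric])
  qed
  have C: "(1 - p0) * ((1 - pj) * (norm ((1 / ((1 - p0) * (1 - pj))) *\<^sub>R g))^2) = 1 / ((1 - p0) * (1 - pj)) * (norm g)^2"
  proof -
    have "0 < (1 - p0) * (1 - pj)" using p0 pj by simp
    from sq_div_helper[OF this, of 1]
    show ?thesis unfolding norm_scale_sq by (simp add: mult.assoc[symmetric])
  qed
  have co: "2 * t^2 / p0 + (1 - t)^2 / ((1 - p0) * pj) = 2 / (p0 + 2 * (1 - p0) * pj)"
    unfolding t by (rule coef_identity[OF p0 pj])
  have "(1 / p0) * (2 * (t * (1 - a))^2 * (norm V)^2) + (1 - t)^2 * (1 - a)^2 / ((1 - p0) * pj) * (norm V)^2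
      = (1 - a)^2 * (norm V)^2 * (2 * t^2 / p0 + (1 - t)^2 / ((1 - p0) * pj))"
    by (simp add: power_mult_distrib distrib_left add_divide_distrib mult_ac)
  also have "\<dots> = 2 * (1 - a)^2 / (p0 + 2 * (1 - p0) * pj) * (norm V)^2" unfolding co by simp
  finally have V: "(1 / p0) * (2 * (t * (1 - a))^2 * (norm V)^2) + (1 - t)^2 * (1 - a)^2 / ((1 - p0) * pj) * (norm V)^2
      = 2 * (1 - a)^2 / (p0 + 2 * (1 - p0) * pj) * (norm V)^2" .
  have "Eterm p0 pj t a U V g = (1 / p0) * (norm (U + (t * (1 - a)) *\<^sub>R V))^2
      + (1 - t)^2 * (1 - a)^2 / ((1 - p0) * pj) * (norm V)^2 + 1 / ((1 - p0) * (1 - pj)) * (norm g)^2"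
    unfolding Eterm_def A[symmetric] B[symmetric] C[symmetric] by (simp add: distrib_left)
  also have "\<dots> \<le> (1 / p0) * (2 * (norm U)^2 + 2 * (t * (1 - a))^2 * (norm V)^2)
      + (1 - t)^2 * (1 - a)^2 / ((1 - p0) * pj) * (norm V)^2 + 1 / ((1 - p0) * (1 - pj)) * (norm g)^2"
    using A2 by simp
  also have "\<dots> = 2 / p0 * (norm U)^2 + 2 * (1 - a)^2 / (p0 + 2 * (1 - p0) * pj) * (norm V)^2
           + 1 / ((1 - p0) * (1 - pj)) * (norm g)^2"
    using V by (simp add: distrib_left)
  finally show ?thesis .
qed



lemma LL1:
  fixes cl :: "'n::finite \<Rightarrow> 'k::finite"
  assumes "0 < p0"
  shows "2 / p0 * (\<alpha> (cl i) * \<gamma> i) \<le> LLcal L \<alpha> \<gamma> cl p0 p"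
proof -
  have "\<alpha> (cl i) * \<gamma> i \<le> Max ((\<lambda>i'. \<alpha> (cl i) * \<gamma> i') ` {i'. cl i' = cl i})"
    by (rule Max_ge) auto
  also have "\<dots> \<le> Max ((\<lambda>j. Max ((\<lambda>i. \<alpha> j * \<gamma> i) ` {i. cl i = j})) ` UNIV)"
    by (rule Max_ge) auto
  finally have "2 / p0 * (\<alpha> (cl i) * \<gamma> i) \<le> 2 / p0 * Max ((\<lambda>j. Max ((\<lambda>i. \<alpha> j * \<gamma> i) ` {i. cl i = j})) ` UNIV)"
    using assms by (intro mult_left_mono) auto
  also have "\<dots> \<le> LLcal L \<alpha> \<gamma> cl p0 p"
    unfolding LLcal_def by (rule Max_ge) auto
  finally show ?thesis .
qed

lemma LL2:
  fixes cl :: "'n::finite \<Rightarrow> 'k::finite"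
  assumes "0 \<le> 2 * (1 - \<alpha> (cl i)) / (p0 + 2 * (1 - p0) * p (cl i))"
  shows "2 * (1 - \<alpha> (cl i)) * \<gamma> i / (p0 + 2 * (1 - p0) * p (cl i)) \<le> LLcal L \<alpha> \<gamma> cl p0 p"
proof -
  have "\<gamma> i \<le> Max (\<gamma> ` {i'. cl i' = cl i})"
    by (rule Max_ge) auto
  then have "2 * (1 - \<alpha> (cl i)) / (p0 + 2 * (1 - p0) * p (cl i)) * \<gamma> i \<le> 2 * (1 - \<alpha> (cl i)) / (p0 + 2 * (1 - p0) * p (cl i)) * Max (\<gamma> ` {i'. cl i' = cl i})"
    using assms by (intro mult_left_mono) auto
  also have "\<dots> \<le> Max ((\<lambda>j. 2 * (1 - \<alpha> j) * Max (\<gamma> ` {i. cl i = j}) / (p0 + 2 * (1 - p0) * p j)) ` UNIV)"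
    by (rule order.trans[OF _ Max_ge[of _ "2 * (1 - \<alpha> (cl i)) * Max (\<gamma> ` {i'. cl i' = cl i}) / (p0 + 2 * (1 - p0) * p (cl i))"]]) auto
  also have "\<dots> \<le> LLcal L \<alpha> \<gamma> cl p0 p"
    unfolding LLcal_def by (rule Max_ge) auto
  finally show ?thesis by simp
qed

lemma LL3:
  fixes cl :: "'n::finite \<Rightarrow> 'k::finite"
  assumes "0 \<le> L" "p0 < 1" "\<And>j. p j < 1"
  shows "L / ((1 - p0) * (1 - p j)) \<le> LLcal L \<alpha> \<gamma> cl p0 p"
proof -
  have "1 / (1 - p j) \<le> Max ((\<lambda>j. 1 / (1 - p j)) ` UNIV)"
    by (rule Max_ge) auto
  then have "L / (1 - p0) * (1 / (1 - p j)) \<le> L / (1 - p0) * Max ((\<lambda>j. 1 / (1 - p j)) ` UNIV)"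
    using assms by (intro mult_left_mono) auto
  also have "\<dots> \<le> LLcal L \<alpha> \<gamma> cl p0 p"
    unfolding LLcal_def by (rule Max_ge) auto
  finally show ?thesis by simp
qed

lemma norm_sq_cluster:
  fixes cl :: "'n::finite \<Rightarrow> 'k" and x :: "'n \<Rightarrow> 'd::real_normed_vector"
  shows "(norm (\<chi> i. if cl i = j then x i else 0))^2 = (\<Sum>i\<in>{i. cl i = j}. (norm (x i))^2)"
  unfolding norm_sq_vec sum_cluster_if[where cl=cl and j=j] by (intro sum.cong) auto

lemma Rc_cw: "Rc (cw \<gamma> cl j) \<Theta> = (\<chi> i. if cl i = j then \<gamma> i *\<^sub>R (\<Theta> $ i - Mc (cw \<gamma> cl j) \<Theta>) else 0)"
  unfolding Rc_def cw_def by (simp add: vec_eq_iff)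

lemma Gorc_1:
  "Gorc f \<alpha> \<gamma> cl p0 p \<tau> True (\<lambda>_. True) \<Theta> $ i = (1 / p0) *\<^sub>R (Rc (wt \<alpha> \<gamma> cl) \<Theta> $ i + (\<tau> (cl i) * (1 - \<alpha> (cl i))) *\<^sub>R Rc (cw \<gamma> cl (cl i)) \<Theta> $ i)"
  unfolding Gorc_def Rc_def cw_def wt_def gm_Mc cm_Mc
  by (simp add: Let_def scaleR_add_right scaleR_scaleR mult.commute mult.left_commute)

lemma Gorc_2:
  "Gorc f \<alpha> \<gamma> cl p0 p \<tau> False (\<lambda>_. True) \<Theta> $ i = ((1 - \<tau> (cl i)) * (1 - \<alpha> (cl i)) / ((1 - p0) * p (cl i))) *\<^sub>R Rc (cw \<gamma> cl (cl i)) \<Theta> $ i"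
  unfolding Gorc_def Rc_def cw_def wt_def gm_Mc cm_Mc
  by (simp add: Let_def scaleR_scaleR)

lemma Gorc_3:
  "Gorc f \<alpha> \<gamma> cl p0 p \<tau> False (\<lambda>_. False) \<Theta> $ i = (1 / ((1 - p0) * (1 - p (cl i)))) *\<^sub>R grad (f i) (\<Theta> $ i)"
  unfolding Gorc_def by (simp add: Let_def)

lemma Gorc_Eterm:
  fixes f :: "'n::finite \<Rightarrow> 'd::euclidean_space \<Rightarrow> real" and cl :: "'n \<Rightarrow> 'k::finite"
  assumes "\<And>j. 0 \<le> p j"
  shows "EGsq f \<alpha> \<gamma> cl p0 p \<tau> \<Theta> = (\<Sum>i\<in>UNIV. Eterm p0 (p (cl i)) (\<tau> (cl i)) (\<alpha> (cl i))
             (Rc (wt \<alpha> \<gamma> cl) \<Theta> $ i) (Rc (cw \<gamma> cl (cl i)) \<Theta> $ i) (grad (f i) (\<Theta> $ i)))"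
  unfolding EGsq_expand[OF assms] Eterm_def
  by (simp only: Gorc_1 Gorc_2 Gorc_3)



lemma norm_Rc_cw: "(norm (Rc (cw \<gamma> cl j) \<Theta>))^2 = (\<Sum>i\<in>{i. cl i = j}. (norm (Rc (cw \<gamma> cl j) \<Theta> $ i))^2)"
  unfolding norm_sq_vec sum_cluster_if[where cl=cl and j=j] by (intro sum.cong) (auto simp: Rc_def cw_def)

lemma norm_gFc: "(norm (\<chi> i. if cl i = j then grad (f i) (\<Theta> $ i) else 0))^2 = (\<Sum>i\<in>{i. cl i = j}. (norm (grad (f i) (\<Theta> $ i)))^2)"
  by (rule norm_sq_cluster)

lemma sum_cw_pos:
  fixes cl :: "'n::finite \<Rightarrow> 'k"
  assumes "surj cl" "\<And>i. 0 < \<gamma> i"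
  shows "(\<Sum>i\<in>UNIV. cw \<gamma> cl j i) \<noteq> 0"
proof -
  obtain i0 where i0: "cl i0 = j" using assms(1) by (metis surjD)
  have "0 < (\<Sum>i\<in>UNIV. cw \<gamma> cl j i)"
    by (rule sum_pos2[of UNIV i0]) (use assms i0 in \<open>auto simp: cw_def less_imp_le\<close>)
  then show ?thesis by simp
qed

lemma sum_wt_pos:
  fixes cl :: "'n::finite \<Rightarrow> 'k"
  assumes "surj cl" "\<And>i. 0 < \<gamma> i" "\<And>j. 0 \<le> \<alpha> j" "\<alpha> j0 \<noteq> 0"
  shows "(\<Sum>i\<in>UNIV. wt \<alpha> \<gamma> cl i) \<noteq> 0"
proof -
  obtain i0 where i0: "cl i0 = j0" using assms(1) by (metis surjD)
  have "0 < \<alpha> j0" using assms(3)[of j0] assms(4) by simp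
  then have "0 < (\<Sum>i\<in>UNIV. wt \<alpha> \<gamma> cl i)"
    by (intro sum_pos2[of UNIV i0]) (use assms i0 in \<open>auto simp: wt_def less_imp_le intro!: mult_nonneg_nonneg\<close>)
  then show ?thesis by simp
qed



theorem mainTheorem7:
  fixes f :: "'n::finite \<Rightarrow> 'd::euclidean_space \<Rightarrow> real"
    and cl :: "'n \<Rightarrow> 'k::finite"
    and \<gamma> :: "'n \<Rightarrow> real" and \<alpha> :: "'k \<Rightarrow> real"
    and \<mu> L p0 :: real and p \<tau> :: "'k \<Rightarrow> real"
    and \<Theta>h \<Theta> :: "'d^'n"
  assumes clusters_nonempty: "surj cl"
    and mu_pos: "0 < \<mu>" and mu_le_L: "\<mu> \<le> L"
    and f_sc: "\<And>i. strongly_convex \<mu> (f i)"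
    and f_smooth: "\<And>i. smooth L (f i)"
    and gamma_pos: "\<And>i. 0 < \<gamma> i"
    and alpha_range: "\<And>j. 0 \<le> \<alpha> j \<and> \<alpha> j \<le> 1"
    and alpha_nz: "\<exists>j. \<alpha> j \<noteq> 0"
    and minimizer: "\<forall>\<Theta>'. Fobj f \<alpha> \<gamma> cl \<Theta>h \<le> Fobj f \<alpha> \<gamma> cl \<Theta>'"
    and p0_range: "0 < p0" "p0 < 1"
    and p_range: "\<And>j. 0 < p j \<and> p j < 1"
    and tau_def: "\<And>j. \<tau> j = p0 / (p0 + 2 * (1 - p0) * p j)"
  shows "EGsq f \<alpha> \<gamma> cl p0 p \<tau> \<Theta>
           \<le> 4 * LLcal L \<alpha> \<gamma> cl p0 p * (Fobj f \<alpha> \<gamma> cl \<Theta> - Fobj f \<alpha> \<gamma> cl \<Theta>h)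
             + 2 * sigma2 f \<alpha> \<gamma> cl p0 p \<Theta>h"
proof -
  define w where "w = wt \<alpha> \<gamma> cl"
  define cj where "cj j = cw \<gamma> cl j" for j
  define LL where "LL = LLcal L \<alpha> \<gamma> cl p0 p"
  define e where "e = \<Theta> - \<Theta>h"
  obtain j0 where j0: "\<alpha> j0 \<noteq> 0" using alpha_nz by blast
  have sw: "(\<Sum>i\<in>UNIV. w i) \<noteq> 0"
    unfolding w_def using sum_wt_pos[of cl \<gamma> \<alpha> j0] clusters_nonempty gamma_pos j0 alpha_range by blast
  have sc: "\<And>j. (\<Sum>i\<in>UNIV. cj j i) \<noteq> 0"
    unfolding cj_def using sum_cw_pos[of cl \<gamma>] clusters_nonempty gamma_pos by blast
  have diff: "\<And>i x. f i differentiable (at x)" using f_smooth unfolding smooth_def by auto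
  have Lpos: "0 < L" using mu_pos mu_le_L by linarith
  have pnn: "\<And>j. 0 \<le> p j" using p_range less_imp_le by blast
  have Dpos: "\<And>j. 0 < p0 + 2 * (1 - p0) * p j"
  proof -
    fix j have "0 \<le> 2 * (1 - p0) * p j" using p0_range p_range[of j] by simp
    then show "0 < p0 + 2 * (1 - p0) * p j" using p0_range by linarith
  qed
  have phi_eq: "phi \<alpha> \<gamma> cl = Qc w" by (rule ext) (simp add: phi_Qc w_def)
  have psi_eq: "\<And>j. psi \<gamma> cl j = Qc (cj j)" by (rule ext) (simp add: psi_Qc cj_def)
  have gphi: "grad (phi \<alpha> \<gamma> cl) \<Theta>h = Rc w \<Theta>h" unfolding phi_eq by (rule grad_eq[OF Qc_deriv[OF sw]])
  have gpsi: "\<And>j. grad (psi \<gamma> cl j) \<Theta>h = Rc (cj j) \<Theta>h" unfolding psi_eq by (rule grad_eq[OF Qc_deriv[OF sc]])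
  have gFc: "\<And>j. grad (Fc f cl j) \<Theta>h = (\<chi> i. if cl i = j then grad (f i) (\<Theta>h $ i) else 0)"
    by (rule grad_eq[OF Fc_deriv[OF diff]])

  define bnd where "bnd U V g i = 2 / p0 * (norm U)^2 + 2 * (1 - \<alpha> (cl i))^2 / (p0 + 2 * (1 - p0) * p (cl i)) * (norm V)^2
           + 1 / ((1 - p0) * (1 - p (cl i))) * (norm g)^2" for U V :: 'd and g :: 'd and i
  define Et where "Et X i = Eterm p0 (p (cl i)) (\<tau> (cl i)) (\<alpha> (cl i)) (Rc w X $ i) (Rc (cj (cl i)) X $ i) (grad (f i) (X $ i))" for X i
  define Bf where "Bf i = f i (\<Theta> $ i) - f i (\<Theta>h $ i) - grad (f i) (\<Theta>h $ i) \<bullet> (\<Theta> $ i - \<Theta>h $ i)" for i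

  have sig: "sigma2 f \<alpha> \<gamma> cl p0 p \<Theta>h = (\<Sum>i\<in>UNIV. bnd (Rc w \<Theta>h $ i) (Rc (cj (cl i)) \<Theta>h $ i) (grad (f i) (\<Theta>h $ i)) i)"
  proof -
    have a: "(norm (grad (phi \<alpha> \<gamma> cl) \<Theta>h))^2 = (\<Sum>i\<in>UNIV. (norm (Rc w \<Theta>h $ i))^2)"
      unfolding gphi norm_sq_vec ..
    have b: "(\<Sum>j\<in>UNIV. 2 * (1 - \<alpha> j)^2 / (p0 + 2 * (1 - p0) * p j) * (norm (grad (psi \<gamma> cl j) \<Theta>h))^2)
        = (\<Sum>i\<in>UNIV. 2 * (1 - \<alpha> (cl i))^2 / (p0 + 2 * (1 - p0) * p (cl i)) * (norm (Rc (cj (cl i)) \<Theta>h $ i))^2)"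
      unfolding gpsi cj_def norm_Rc_cw sum_distrib_left by (rule regroup)
    have c: "1 / (1 - p0) * (\<Sum>j\<in>UNIV. 1 / (1 - p j) * (norm (grad (Fc f cl j) \<Theta>h))^2)
        = (\<Sum>i\<in>UNIV. 1 / ((1 - p0) * (1 - p (cl i))) * (norm (grad (f i) (\<Theta>h $ i)))^2)"
      unfolding gFc norm_gFc sum_distrib_left regroup by (intro sum.cong refl) simp
    show ?thesis unfolding sigma2_def a b c bnd_def by (simp add: sum.distrib sum_distrib_left)
  qed

  have M1: "EGsq f \<alpha> \<gamma> cl p0 p \<tau> \<Theta> = (\<Sum>i\<in>UNIV. Et \<Theta> i)"
    unfolding Et_def w_def cj_def by (rule Gorc_Eterm[OF pnn])

  have Bf_nn: "0 \<le> Bf i" for i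
  proof -
    have "f i (\<Theta>h $ i) + grad (f i) (\<Theta>h $ i) \<bullet> (\<Theta> $ i - \<Theta>h $ i) \<le> f i (\<Theta> $ i)"
      by (rule sc_tangent[OF f_sc _ diff]) (use mu_pos in simp)
    then show ?thesis unfolding Bf_def by simp
  qed

  have M2: "Et \<Theta> i \<le> 2 * (LL * (w i * (norm (e $ i - Mc w e))^2) + LL * ((1 - \<alpha> (cl i)) * \<gamma> i * (norm (e $ i - Mc (cj (cl i)) e))^2) + 2 * LL * Bf i)
          + 2 * bnd (Rc w \<Theta>h $ i) (Rc (cj (cl i)) \<Theta>h $ i) (grad (f i) (\<Theta>h $ i)) i" for i
  proof -
    have pr: "0 \<le> p0" "p0 \<le> 1" "0 \<le> p (cl i)" "p (cl i) \<le> 1" using p0_range p_range[of "cl i"] by auto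
    have s: "Et \<Theta> i \<le> 2 * Eterm p0 (p (cl i)) (\<tau> (cl i)) (\<alpha> (cl i)) (Rc w e $ i) (Rc (cj (cl i)) e $ i) (grad (f i) (\<Theta> $ i) - grad (f i) (\<Theta>h $ i))
                         + 2 * Et \<Theta>h i"
      unfolding Et_def e_def Rc_diff vector_minus_component by (rule Eterm_split[OF pr])
    have b1: "Et \<Theta>h i \<le> bnd (Rc w \<Theta>h $ i) (Rc (cj (cl i)) \<Theta>h $ i) (grad (f i) (\<Theta>h $ i)) i"
      unfolding Et_def bnd_def by (rule Eterm_bound[OF p0_range p_range[THEN conjunct1] p_range[THEN conjunct2] tau_def])
    have b2: "Eterm p0 (p (cl i)) (\<tau> (cl i)) (\<alpha> (cl i)) (Rc w e $ i) (Rc (cj (cl i)) e $ i) (grad (f i) (\<Theta> $ i) - grad (f i) (\<Theta>h $ i))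
        \<le> bnd (Rc w e $ i) (Rc (cj (cl i)) e $ i) (grad (f i) (\<Theta> $ i) - grad (f i) (\<Theta>h $ i)) i"
      unfolding bnd_def by (rule Eterm_bound[OF p0_range p_range[THEN conjunct1] p_range[THEN conjunct2] tau_def])
    have t1: "2 / p0 * (norm (Rc w e $ i))^2 \<le> LL * (w i * (norm (e $ i - Mc w e))^2)"
    proof -
      have "2 / p0 * (norm (Rc w e $ i))^2 = (2 / p0 * w i) * (w i * (norm (e $ i - Mc w e))^2)"
        unfolding Rc_def by (simp add: norm_scale_sq power2_eq_square)
      also have "\<dots> \<le> LL * (w i * (norm (e $ i - Mc w e))^2)"
        unfolding LL_def w_def wt_def using LL1[OF p0_range(1), of \<alpha> cl i \<gamma> L p] alpha_range gamma_pos[of i]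
        by (intro mult_right_mono mult_nonneg_nonneg) (auto simp: less_imp_le)
      finally show ?thesis .
    qed
    have t2: "2 * (1 - \<alpha> (cl i))^2 / (p0 + 2 * (1 - p0) * p (cl i)) * (norm (Rc (cj (cl i)) e $ i))^2
          \<le> LL * ((1 - \<alpha> (cl i)) * \<gamma> i * (norm (e $ i - Mc (cj (cl i)) e))^2)"
    proof -
      have "2 * (1 - \<alpha> (cl i))^2 / (p0 + 2 * (1 - p0) * p (cl i)) * (norm (Rc (cj (cl i)) e $ i))^2
          = (2 * (1 - \<alpha> (cl i)) * \<gamma> i / (p0 + 2 * (1 - p0) * p (cl i))) * ((1 - \<alpha> (cl i)) * \<gamma> i * (norm (e $ i - Mc (cj (cl i)) e))^2)"
        unfolding Rc_def cj_def cw_def by (simp add: norm_scale_sq power2_eq_square)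
      also have "\<dots> \<le> LL * ((1 - \<alpha> (cl i)) * \<gamma> i * (norm (e $ i - Mc (cj (cl i)) e))^2)"
        unfolding LL_def using LL2[of \<alpha> cl i p0 p \<gamma> L] alpha_range[of "cl i"] gamma_pos[of i] Dpos[of "cl i"]
        by (intro mult_right_mono mult_nonneg_nonneg) (auto simp: less_imp_le)
      finally show ?thesis .
    qed
    have t3: "1 / ((1 - p0) * (1 - p (cl i))) * (norm (grad (f i) (\<Theta> $ i) - grad (f i) (\<Theta>h $ i)))^2 \<le> 2 * LL * Bf i"
    proof -
      have q: "0 < (1 - p0) * (1 - p (cl i))" using p0_range p_range[of "cl i"] by simp
      have "1 / ((1 - p0) * (1 - p (cl i))) * (norm (grad (f i) (\<Theta> $ i) - grad (f i) (\<Theta>h $ i)))^2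
          \<le> 1 / ((1 - p0) * (1 - p (cl i))) * (2 * L * Bf i)"
        unfolding Bf_def using cocoercive[OF f_sc _ f_smooth Lpos] mu_pos q
        by (intro mult_left_mono) (auto simp: less_imp_le)
      also have "\<dots> = 2 * (L / ((1 - p0) * (1 - p (cl i)))) * Bf i" by simp
      also have "\<dots> \<le> 2 * LL * Bf i"
        unfolding LL_def using LL3[of L p0 p "cl i" \<alpha> \<gamma> cl] Lpos p0_range p_range Bf_nn[of i]
        by (intro mult_right_mono) (auto simp: less_imp_le)
      finally show ?thesis .
    qed
    have b3: "Eterm p0 (p (cl i)) (\<tau> (cl i)) (\<alpha> (cl i)) (Rc w e $ i) (Rc (cj (cl i)) e $ i) (grad (f i) (\<Theta> $ i) - grad (f i) (\<Theta>h $ i))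
       \<le> LL * (w i * (norm (e $ i - Mc w e))^2) + LL * ((1 - \<alpha> (cl i)) * \<gamma> i * (norm (e $ i - Mc (cj (cl i)) e))^2) + 2 * LL * Bf i"
      using b2 add_mono[OF add_mono[OF t1 t2] t3] unfolding bnd_def by (rule order.trans)
    have "2 * Eterm p0 (p (cl i)) (\<tau> (cl i)) (\<alpha> (cl i)) (Rc w e $ i) (Rc (cj (cl i)) e $ i) (grad (f i) (\<Theta> $ i) - grad (f i) (\<Theta>h $ i))
                         + 2 * Et \<Theta>h i \<le> 2 * (LL * (w i * (norm (e $ i - Mc w e))^2) + LL * ((1 - \<alpha> (cl i)) * \<gamma> i * (norm (e $ i - Mc (cj (cl i)) e))^2) + 2 * LL * Bf i)
          + 2 * bnd (Rc w \<Theta>h $ i) (Rc (cj (cl i)) \<Theta>h $ i) (grad (f i) (\<Theta>h $ i)) i"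
      by (intro add_mono mult_left_mono b1 b3) auto
    with s show ?thesis by (rule order.trans)
  qed

  have M5: "Fobj f \<alpha> \<gamma> cl \<Theta> - Fobj f \<alpha> \<gamma> cl \<Theta>h
      = Qc w e + (\<Sum>j\<in>UNIV. (1 - \<alpha> j) * Qc (cj j) e) + (\<Sum>i\<in>UNIV. Bf i)"
  proof -
    define gF where "gF j = (\<chi> i. if cl i = j then grad (f i) (\<Theta>h $ i) else 0)" for j
    define Dv where "Dv h = (\<Sum>j\<in>UNIV. gF j \<bullet> h) + (\<Sum>j\<in>UNIV. (1 - \<alpha> j) * (Rc (cj j) \<Theta>h \<bullet> h)) + Rc w \<Theta>h \<bullet> h" for h
    have Fo: "Fobj f \<alpha> \<gamma> cl = (\<lambda>X. (\<Sum>j\<in>UNIV. Fc f cl j X) + (\<Sum>j\<in>UNIV. (1 - \<alpha> j) * Qc (cj j) X) + Qc w X)"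
      by (rule ext) (simp add: Fobj_def psi_eq phi_eq)
    have der: "(Fobj f \<alpha> \<gamma> cl has_derivative Dv) (at \<Theta>h)"
      unfolding Fo Dv_def gF_def
      by (intro has_derivative_add has_derivative_sum has_derivative_mult_right Fc_deriv[OF diff] Qc_deriv[OF sc] Qc_deriv[OF sw])
    have "Dv = (\<lambda>v. 0)"
      by (rule differential_zero_maxmin[of \<Theta>h UNIV _ Dv]) (use der minimizer in auto)
    then have D0: "Dv e = 0" by simp
    have fcj: "Fc f cl j \<Theta> - Fc f cl j \<Theta>h - gF j \<bullet> e = (\<Sum>i\<in>{i. cl i = j}. Bf i)" for j
    proof -
      have "gF j \<bullet> e = (\<Sum>i\<in>{i. cl i = j}. grad (f i) (\<Theta>h $ i) \<bullet> (\<Theta> $ i - \<Theta>h $ i))"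
        unfolding gF_def e_def
        by (simp add: inner_vec_def sum_cluster_if[where cl=cl and j=j] if_distrib[where f="\<lambda>v. v \<bullet> _"] cong: if_cong)
      then show ?thesis unfolding Fc_def Bf_def by (simp add: sum_subtractf)
    qed
    have fc: "(\<Sum>j\<in>UNIV. Fc f cl j \<Theta> - Fc f cl j \<Theta>h - gF j \<bullet> e) = (\<Sum>i\<in>UNIV. Bf i)"
      unfolding fcj by (rule regroup)
    have "Fobj f \<alpha> \<gamma> cl \<Theta> - Fobj f \<alpha> \<gamma> cl \<Theta>h
        = (\<Sum>j\<in>UNIV. Fc f cl j \<Theta> - Fc f cl j \<Theta>h - gF j \<bullet> e)
        + (\<Sum>j\<in>UNIV. (1 - \<alpha> j) * (Qc (cj j) \<Theta> - Qc (cj j) \<Theta>h - Rc (cj j) \<Theta>h \<bullet> (\<Theta> - \<Theta>h)))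
        + (Qc w \<Theta> - Qc w \<Theta>h - Rc w \<Theta>h \<bullet> (\<Theta> - \<Theta>h)) + Dv e"
      unfolding Fo Dv_def e_def by (simp add: sum_subtractf sum.distrib right_diff_distrib)
    also have "\<dots> = Qc w e + (\<Sum>j\<in>UNIV. (1 - \<alpha> j) * Qc (cj j) e) + (\<Sum>i\<in>UNIV. Bf i)"
      by (simp add: fc[unfolded e_def] D0[unfolded e_def] Qc_expand[OF sw] Qc_expand[OF sc] e_def)
    finally show ?thesis .
  qed

  have M6: "(\<Sum>i\<in>UNIV. LL * (w i * (norm (e $ i - Mc w e))^2) + LL * ((1 - \<alpha> (cl i)) * \<gamma> i * (norm (e $ i - Mc (cj (cl i)) e))^2) + 2 * LL * Bf i)
      = 2 * LL * (Qc w e + (\<Sum>j\<in>UNIV. (1 - \<alpha> j) * Qc (cj j) e) + (\<Sum>i\<in>UNIV. Bf i))"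
  proof -
    have a: "(\<Sum>i\<in>UNIV. w i * (norm (e $ i - Mc w e))^2) = 2 * Qc w e" unfolding Qc_def by simp
    have q: "Qc (cj j) e = 1/2 * (\<Sum>i\<in>{i. cl i = j}. \<gamma> i * (norm (e $ i - Mc (cj j) e))^2)" for j
      unfolding Qc_def cj_def
      using sum_cw[where F="\<lambda>a i. a * (norm (e $ i - Mc (cw \<gamma> cl j) e))^2" and \<gamma>=\<gamma> and cl=cl and j=j] by simp
    have b: "(\<Sum>i\<in>UNIV. (1 - \<alpha> (cl i)) * \<gamma> i * (norm (e $ i - Mc (cj (cl i)) e))^2) = 2 * (\<Sum>j\<in>UNIV. (1 - \<alpha> j) * Qc (cj j) e)"
    proof -
      have "(\<Sum>j\<in>UNIV. (1 - \<alpha> j) * Qc (cj j) e) = 1/2 * (\<Sum>j\<in>UNIV. \<Sum>i\<in>{i. cl i = j}. (1 - \<alpha> j) * \<gamma> i * (norm (e $ i - Mc (cj j) e))^2)"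
        unfolding q by (simp add: sum_distrib_left mult.assoc mult.left_commute)
      also have "\<dots> = 1/2 * (\<Sum>i\<in>UNIV. (1 - \<alpha> (cl i)) * \<gamma> i * (norm (e $ i - Mc (cj (cl i)) e))^2)"
        by (simp only: regroup[where cl=cl and g="\<lambda>j i. (1 - \<alpha> j) * \<gamma> i * (norm (e $ i - Mc (cj j) e))^2"])
      finally show ?thesis by simp
    qed
    have "(\<Sum>i\<in>UNIV. LL * (w i * (norm (e $ i - Mc w e))^2) + LL * ((1 - \<alpha> (cl i)) * \<gamma> i * (norm (e $ i - Mc (cj (cl i)) e))^2) + 2 * LL * Bf i)
       = LL * (\<Sum>i\<in>UNIV. w i * (norm (e $ i - Mc w e))^2) + LL * (\<Sum>i\<in>UNIV. (1 - \<alpha> (cl i)) * \<gamma> i * (norm (e $ i - Mc (cj (cl i)) e))^2) + 2 * LL * (\<Sum>i\<in>UNIV. Bf i)"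
      by (simp only: sum.distrib sum_distrib_left)
    then show ?thesis unfolding a b by (simp add: algebra_simps)
  qed

  have "EGsq f \<alpha> \<gamma> cl p0 p \<tau> \<Theta> \<le> (\<Sum>i\<in>UNIV. 2 * (LL * (w i * (norm (e $ i - Mc w e))^2) + LL * ((1 - \<alpha> (cl i)) * \<gamma> i * (norm (e $ i - Mc (cj (cl i)) e))^2) + 2 * LL * Bf i)
          + 2 * bnd (Rc w \<Theta>h $ i) (Rc (cj (cl i)) \<Theta>h $ i) (grad (f i) (\<Theta>h $ i)) i)"
    unfolding M1 by (rule sum_mono) (rule M2)
  also have "\<dots> = 2 * (2 * LL * (Qc w e + (\<Sum>j\<in>UNIV. (1 - \<alpha> j) * Qc (cj j) e) + (\<Sum>i\<in>UNIV. Bf i))) + 2 * sigma2 f \<alpha> \<gamma> cl p0 p \<Theta>h"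
    unfolding sig M6[symmetric] by (simp add: sum.distrib sum_distrib_left)
  also have "\<dots> = 4 * LLcal L \<alpha> \<gamma> cl p0 p * (Fobj f \<alpha> \<gamma> cl \<Theta> - Fobj f \<alpha> \<gamma> cl \<Theta>h) + 2 * sigma2 f \<alpha> \<gamma> cl p0 p \<Theta>h"
    unfolding M5 LL_def by simp
  finally show ?thesis .
qed

end
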